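(* Let $X\in\mathcal M_{\mathbf r}$, $U_1,\dots,U_d$ a minimal left-orthogonal TT decomposition of $X$, and $V\in\mathrm T_X\mathcal M_{\mathbf r}$ given by gauged cores $\delta V_1,\dots,\delta V_d$. Let $c_1,\dots,c_d$ be smooth core curves on $(-\epsilon,\epsilon)$ with $c_k(t)=U_k+t\,\delta V_k+O(t^2)$ ($k<d$), $c_d(t)=U_d+t\,\delta V_d$, such that for every $t$ the cores $c_1(t),\dots,c_d(t)$ form a minimal left-orthogonal TT decomposition of a tensor in $\mathcal M_{\mathbf r}$. Let $X_{\le k}(t),X_{\ge k}(t)$ denote the interface matrices built from $c_1(t),\dots,c_d(t)$. Then for all $k\in[d]$: (1) $\frac{d}{dt}X_{\le k}(t)\big|_{t=0}=V_{\le k}$; (2) $\frac{d}{dt}X_{\ge k}(t)\big|_{t=0}=V_{\ge k}$.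
   Context: Fix $d\ge2$, positive integers $n_1,\dots,n_d$, $\mathbf r=(r_1,\dots,r_{d-1})$, $r_0=r_d=1$; $\mathcal M_{\mathbf r}$ is the manifold of tensors of TT-rank $\mathbf r$ (TT-rank defined via ranks of the colexicographic flattenings $Z^{<\mu>}$). TT cores $U_k\in\mathbb R^{r_{k-1}\times n_k\times r_k}$ with slices $U_k(i)$ give $X(i_1,\dots,i_d)=U_1(i_1)\cdots U_d(i_d)$; minimal means the TT-rank equals $\mathbf r$; $U^L:=U^{<2>}\in\mathbb R^{r_{k-1}n_k\times r_k}$, $U^R:=U^{<1>}\in\mathbb R^{r_{k-1}\times n_kr_k}$; left-orthogonal means $(U_k^L)^\top U_k^L=I$ for $k<d$. Interface matrices: $X_{\le0}=1$, $X_{\le k}=(I_{n_k}\otimes X_{\le k-1})U_k^L$; $X_{\ge d+1}=1$, $X_{\ge k}^\top=U_k^R(X_{\ge k+1}^\top\otimes I_{n_k})$. Tangent vectors: $V=\sum_kU_1(i_1)\cdots U_{k-1}(i_{k-1})\delta V_k(i_k)U_{k+1}(i_{k+1})\cdots U_d(i_d)$ with $(\delta V_k^L)^\top U_k^L=0$ for $k<d$. Variational interface matrices: $V_{\le0}=0$, $V_{\le k}=(I_{n_k}\otimes V_{\le k-1})U_k^L+(I_{n_k}\otimes X_{\le k-1})\delta V_k^L$; $V_{\ge d+1}=0$, $V_{\ge k}^\top=U_k^R(V_{\ge k+1}^\top\otimes I_{n_k})+\delta V_k^R(X_{\ge k+1}^\top\otimes I_{n_k})$. *)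

theory Defs
  imports "Jordan_Normal_Form.DL_Rank" "HOL-Library.Landau_Symbols"
begin

(* Conventions: cores are indexed k = 1..d; a core is a function
   U a i b  (a < r (k-1), i < n k, b < r k).  Ranks r :: nat => nat with
   r 0 = r d = 1.  Mode sizes n :: nat => nat (n k for k = 1..d).
   Tensors are functions on index lists  [i_1,...,i_d]  (0-based indices). *)

type_synonym core = "nat \<Rightarrow> nat \<Rightarrow> nat \<Rightarrow> real"

definition kron :: "real mat \<Rightarrow> real mat \<Rightarrow> real mat" where
  "kron A B = mat (dim_row A * dim_row B) (dim_col A * dim_col B)
     (\<lambda>(i,j). A $$ (i div dim_row B, j div dim_col B) * B $$ (i mod dim_row B, j mod dim_col B))"

(* U^L = U^{<2>} : (r_{k-1} n_k) x r_k, row index a + i * r_{k-1} (colexicographic) *)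
definition coreL :: "(nat \<Rightarrow> nat) \<Rightarrow> (nat \<Rightarrow> nat) \<Rightarrow> nat \<Rightarrow> core \<Rightarrow> real mat" where
  "coreL r n k U = mat (r (k-1) * n k) (r k)
     (\<lambda>(row,b). U (row mod r (k-1)) (row div r (k-1)) b)"

(* U^R = U^{<1>} : r_{k-1} x (n_k r_k), column index i + b * n_k (colexicographic) *)
definition coreR :: "(nat \<Rightarrow> nat) \<Rightarrow> (nat \<Rightarrow> nat) \<Rightarrow> nat \<Rightarrow> core \<Rightarrow> real mat" where
  "coreR r n k U = mat (r (k-1)) (n k * r k)
     (\<lambda>(a,col). U a (col mod n k) (col div n k))"

definition slice :: "(nat \<Rightarrow> nat) \<Rightarrow> nat \<Rightarrow> core \<Rightarrow> nat \<Rightarrow> real mat" where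
  "slice r k U i = mat (r (k-1)) (r k) (\<lambda>(a,b). U a i b)"

definition tt_eval :: "(nat \<Rightarrow> nat) \<Rightarrow> nat \<Rightarrow> (nat \<Rightarrow> core) \<Rightarrow> nat list \<Rightarrow> real" where
  "tt_eval r d U xs =
     (foldl (\<lambda>M k. M * slice r k (U k) (xs ! (k-1))) (1\<^sub>m 1) [1..<d+1]) $$ (0,0)"

(* colexicographic decoding of a linear index (first index runs fastest) *)
fun colex_decode :: "nat list \<Rightarrow> nat \<Rightarrow> nat list" where
  "colex_decode [] \<rho> = []"
| "colex_decode (m # ms) \<rho> = (\<rho> mod m) # colex_decode ms (\<rho> div m)"

definition flattening :: "nat \<Rightarrow> (nat \<Rightarrow> nat) \<Rightarrow> (nat list \<Rightarrow> real) \<Rightarrow> nat \<Rightarrow> real mat" where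
  "flattening d n Z \<mu> = mat (\<Prod>k\<in>{1..\<mu>}. n k) (\<Prod>k\<in>{\<mu>+1..d}. n k)
     (\<lambda>(\<rho>,\<sigma>). Z (colex_decode (map n [1..<\<mu>+1]) \<rho> @ colex_decode (map n [\<mu>+1..<d+1]) \<sigma>))"

definition mat_rank :: "real mat \<Rightarrow> nat" where
  "mat_rank A = vec_space.rank (dim_row A) A"

definition has_tt_rank :: "nat \<Rightarrow> (nat \<Rightarrow> nat) \<Rightarrow> (nat \<Rightarrow> nat) \<Rightarrow> (nat list \<Rightarrow> real) \<Rightarrow> bool" where
  "has_tt_rank d n r Z \<longleftrightarrow> (\<forall>\<mu>\<in>{1..<d}. mat_rank (flattening d n Z \<mu>) = r \<mu>)"

definition valid_index :: "nat \<Rightarrow> (nat \<Rightarrow> nat) \<Rightarrow> nat list \<Rightarrow> bool" where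
  "valid_index d n xs \<longleftrightarrow> length xs = d \<and> (\<forall>j<d. xs ! j < n (j+1))"

definition left_orthogonal :: "nat \<Rightarrow> (nat \<Rightarrow> nat) \<Rightarrow> (nat \<Rightarrow> nat) \<Rightarrow> (nat \<Rightarrow> core) \<Rightarrow> bool" where
  "left_orthogonal d n r U \<longleftrightarrow>
     (\<forall>k\<in>{1..<d}. transpose_mat (coreL r n k (U k)) * coreL r n k (U k) = 1\<^sub>m (r k))"

definition min_lo_TT_decomp :: "nat \<Rightarrow> (nat \<Rightarrow> nat) \<Rightarrow> (nat \<Rightarrow> nat) \<Rightarrow> (nat \<Rightarrow> core) \<Rightarrow> (nat list \<Rightarrow> real) \<Rightarrow> bool" where
  "min_lo_TT_decomp d n r U X \<longleftrightarrow>
     (\<forall>xs. valid_index d n xs \<longrightarrow> X xs = tt_eval r d U xs)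
     \<and> has_tt_rank d n r X \<and> left_orthogonal d n r U"

definition gauged :: "nat \<Rightarrow> (nat \<Rightarrow> nat) \<Rightarrow> (nat \<Rightarrow> nat) \<Rightarrow> (nat \<Rightarrow> core) \<Rightarrow> (nat \<Rightarrow> core) \<Rightarrow> bool" where
  "gauged d n r U dV \<longleftrightarrow>
     (\<forall>k\<in>{1..<d}. transpose_mat (coreL r n k (dV k)) * coreL r n k (U k) = 0\<^sub>m (r k) (r k))"

fun Xle :: "(nat \<Rightarrow> nat) \<Rightarrow> (nat \<Rightarrow> nat) \<Rightarrow> (nat \<Rightarrow> core) \<Rightarrow> nat \<Rightarrow> real mat" where
  "Xle r n U 0 = 1\<^sub>m 1"
| "Xle r n U (Suc k) = kron (1\<^sub>m (n (Suc k))) (Xle r n U k) * coreL r n (Suc k) (U (Suc k))"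

(* XgeT_aux d .. m = X_{>= d+1-m}^T *)
fun XgeT_aux :: "nat \<Rightarrow> (nat \<Rightarrow> nat) \<Rightarrow> (nat \<Rightarrow> nat) \<Rightarrow> (nat \<Rightarrow> core) \<Rightarrow> nat \<Rightarrow> real mat" where
  "XgeT_aux d r n U 0 = 1\<^sub>m 1"
| "XgeT_aux d r n U (Suc m) = coreR r n (d - m) (U (d - m)) * kron (XgeT_aux d r n U m) (1\<^sub>m (n (d - m)))"

definition Xge :: "nat \<Rightarrow> (nat \<Rightarrow> nat) \<Rightarrow> (nat \<Rightarrow> nat) \<Rightarrow> (nat \<Rightarrow> core) \<Rightarrow> nat \<Rightarrow> real mat" where
  "Xge d r n U k = transpose_mat (XgeT_aux d r n U (d + 1 - k))"

fun Vle :: "(nat \<Rightarrow> nat) \<Rightarrow> (nat \<Rightarrow> nat) \<Rightarrow> (nat \<Rightarrow> core) \<Rightarrow> (nat \<Rightarrow> core) \<Rightarrow> nat \<Rightarrow> real mat" where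
  "Vle r n U dV 0 = 0\<^sub>m 1 1"
| "Vle r n U dV (Suc k) =
     kron (1\<^sub>m (n (Suc k))) (Vle r n U dV k) * coreL r n (Suc k) (U (Suc k))
     + kron (1\<^sub>m (n (Suc k))) (Xle r n U k) * coreL r n (Suc k) (dV (Suc k))"

fun VgeT_aux :: "nat \<Rightarrow> (nat \<Rightarrow> nat) \<Rightarrow> (nat \<Rightarrow> nat) \<Rightarrow> (nat \<Rightarrow> core) \<Rightarrow> (nat \<Rightarrow> core) \<Rightarrow> nat \<Rightarrow> real mat" where
  "VgeT_aux d r n U dV 0 = 0\<^sub>m 1 1"
| "VgeT_aux d r n U dV (Suc m) =
     coreR r n (d - m) (U (d - m)) * kron (VgeT_aux d r n U dV m) (1\<^sub>m (n (d - m)))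
     + coreR r n (d - m) (dV (d - m)) * kron (XgeT_aux d r n U m) (1\<^sub>m (n (d - m)))"

definition Vge :: "nat \<Rightarrow> (nat \<Rightarrow> nat) \<Rightarrow> (nat \<Rightarrow> nat) \<Rightarrow> (nat \<Rightarrow> core) \<Rightarrow> (nat \<Rightarrow> core) \<Rightarrow> nat \<Rightarrow> real mat" where
  "Vge d r n U dV k = transpose_mat (VgeT_aux d r n U dV (d + 1 - k))"

definition mat_has_derivative_at :: "(real \<Rightarrow> real mat) \<Rightarrow> real mat \<Rightarrow> real \<Rightarrow> bool" where
  "mat_has_derivative_at A D t0 \<longleftrightarrow>
     (\<forall>t. dim_row (A t) = dim_row D \<and> dim_col (A t) = dim_col D) \<and>
     (\<forall>i<dim_row D. \<forall>j<dim_col D. ((\<lambda>t. A t $$ (i,j)) has_real_derivative D $$ (i,j)) (at t0))"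

definition smooth_real_on :: "(real \<Rightarrow> real) \<Rightarrow> real set \<Rightarrow> bool" where
  "smooth_real_on f S \<longleftrightarrow>
     (\<exists>D :: nat \<Rightarrow> real \<Rightarrow> real. D 0 = f \<and>
        (\<forall>m. \<forall>t\<in>S. (D m has_real_derivative D (Suc m) t) (at t)))"

end

theory Submission imports Defs begin

lemma scalar_core:
  fixes f :: "real \<Rightarrow> real" and \<epsilon> u v :: real
  assumes eps: "\<epsilon> > 0"
    and sm: "smooth_real_on f {-\<epsilon><..<\<epsilon>}"
    and bo: "(\<lambda>t. f t - u - t * v) \<in> O[at 0](\<lambda>t. t ^ 2)"
  shows "f 0 = u \<and> (f has_real_derivative v) (at 0)"
proof -
  obtain D where D0: "D 0 = f" and DD: "\<forall>m. \<forall>t\<in>{-\<epsilon><..<\<epsilon>}. (D m has_real_derivative D (Suc m) t) (at t)"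
    using sm unfolding smooth_real_on_def by blast
  have "(f has_real_derivative D 1 0) (at 0)" using DD eps D0 by force
  hence "isCont f 0" by (rule DERIV_isCont)
  hence fc: "(f \<longlongrightarrow> f 0) (at 0)" by (simp add: isCont_def)
  define g where "g t = f t - u - t * v" for t
  obtain C where C: "C > 0" "eventually (\<lambda>t. norm (g t) \<le> C * norm (t ^ 2)) (at (0::real))"
    using bo unfolding g_def by (elim landau_o.bigE) 
  have lim0: "((\<lambda>t. C * t^2) \<longlongrightarrow> 0) (at (0::real))"
    by (auto intro!: tendsto_eq_intros)
  have lim1: "((\<lambda>t. C * \<bar>t\<bar>) \<longlongrightarrow> 0) (at (0::real))"
    by (auto intro!: tendsto_eq_intros)
  have "((\<lambda>t. \<bar>g t\<bar>) \<longlongrightarrow> 0) (at 0)"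
    by (rule tendsto_sandwich[OF _ _ tendsto_const lim0]) (use C in \<open>auto elim: eventually_mono\<close>)
  hence g0: "(g \<longlongrightarrow> 0) (at 0)" by (simp add: tendsto_rabs_zero_iff)
  have "(g \<longlongrightarrow> f 0 - u - 0 * v) (at 0)" unfolding g_def
    by (intro tendsto_intros fc) 
  hence "f 0 - u - 0 * v = 0" by (rule tendsto_unique[OF at_neq_bot _ g0])
  hence fu: "f 0 = u" by simp
  have "eventually (\<lambda>t. \<bar>g t / t\<bar> \<le> C * \<bar>t\<bar>) (at (0::real))"
  proof -
    have "eventually (\<lambda>t::real. t \<noteq> 0) (at 0)" by (simp add: eventually_at_filter)
    with C(2) show ?thesis
    proof (rule eventually_elim2)
      fix t :: real assume a: "norm (g t) \<le> C * norm (t^2)" and t: "t \<noteq> 0"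
      have "\<bar>g t / t\<bar> = \<bar>g t\<bar> / \<bar>t\<bar>" by (simp add: abs_divide)
      also have "\<dots> \<le> C * t^2 / \<bar>t\<bar>" using a t by (intro divide_right_mono) auto
      also have "\<dots> = C * \<bar>t\<bar>" proof -
        have "t^2 = \<bar>t\<bar> * \<bar>t\<bar>" by (simp add: power2_eq_square)
        thus ?thesis using t by (simp only:) (simp add: field_simps)
      qed
      finally show "\<bar>g t / t\<bar> \<le> C * \<bar>t\<bar>" .
    qed
  qed
  hence "((\<lambda>t. \<bar>g t / t\<bar>) \<longlongrightarrow> 0) (at 0)"
    by (intro tendsto_sandwich[OF _ _ tendsto_const lim1]) auto
  hence gt: "((\<lambda>t. g t / t) \<longlongrightarrow> 0) (at 0)" using tendsto_rabs_zero_iff by blast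
  have "((\<lambda>t. v + g t / t) \<longlongrightarrow> v + 0) (at 0)" by (intro tendsto_intros gt)
  hence L: "((\<lambda>t. v + g t / t) \<longlongrightarrow> v) (at 0)" by simp
  have E: "eventually (\<lambda>t. v + g t / t = (f t - f 0) / (t - 0)) (at (0::real))"
    by (simp add: eventually_at_filter g_def fu field_simps)
  have "((\<lambda>t. (f t - f 0) / (t - 0)) \<longlongrightarrow> v) (at 0)"
    by (rule iffD1[OF tendsto_cong[OF E] L])
  hence "(f has_real_derivative v) (at 0)" by (simp add: has_field_derivative_iff)
  with fu show ?thesis by simp
qed

lemma mult_entry:
  assumes "i < dim_row A" "j < dim_col B" "dim_col A = dim_row B"
  shows "(A * B) $$ (i,j) = (\<Sum>l\<in>{0..<dim_row B}. A $$ (i,l) * B $$ (l,j))"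
  using assms by (simp add: scalar_prod_def)

lemma mderiv_mult:
  assumes A: "mat_has_derivative_at A DA 0" and B: "mat_has_derivative_at B DB 0"
    and dc: "dim_col DA = dim_row DB"
  shows "mat_has_derivative_at (\<lambda>t. A t * B t) (DA * B 0 + A 0 * DB) 0"
proof -
  have dA: "\<And>t. dim_row (A t) = dim_row DA \<and> dim_col (A t) = dim_col DA"
    and dB: "\<And>t. dim_row (B t) = dim_row DB \<and> dim_col (B t) = dim_col DB"
    using A B unfolding mat_has_derivative_at_def by auto
  show ?thesis unfolding mat_has_derivative_at_def
  proof (intro conjI allI impI)
    fix t show "dim_row (A t * B t) = dim_row (DA * B 0 + A 0 * DB)"
      "dim_col (A t * B t) = dim_col (DA * B 0 + A 0 * DB)" using dA dB by auto
  next
    fix i j assume i: "i < dim_row (DA * B 0 + A 0 * DB)" and j: "j < dim_col (DA * B 0 + A 0 * DB)"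
    hence i': "i < dim_row DA" and j': "j < dim_col DB" using dA dB by auto
    have e1: "(A t * B t) $$ (i,j) = (\<Sum>l\<in>{0..<dim_row DB}. A t $$ (i,l) * B t $$ (l,j))" for t
      using mult_entry[of i "A t" j "B t"] i' j' dA dB dc by auto
    have e2: "(DA * B 0 + A 0 * DB) $$ (i,j) = (\<Sum>l\<in>{0..<dim_row DB}. DA $$ (i,l) * B 0 $$ (l,j) + DB $$ (l,j) * A 0 $$ (i,l))"
      using i' j' dA dB dc by (simp add: scalar_prod_def sum.distrib mult.commute)
    have "((\<lambda>t. \<Sum>l\<in>{0..<dim_row DB}. A t $$ (i,l) * B t $$ (l,j)) has_real_derivative
         (\<Sum>l\<in>{0..<dim_row DB}. DA $$ (i,l) * B 0 $$ (l,j) + DB $$ (l,j) * A 0 $$ (i,l))) (at 0)"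
    proof (rule DERIV_sum, rule DERIV_mult)
      fix l assume l: "l \<in> {0..<dim_row DB}"
      show "((\<lambda>t. A t $$ (i, l)) has_real_derivative DA $$ (i, l)) (at 0)"
        using A i' l dc unfolding mat_has_derivative_at_def by auto
      show "((\<lambda>t. B t $$ (l, j)) has_real_derivative DB $$ (l, j)) (at 0)"
        using B j' l unfolding mat_has_derivative_at_def by auto
    qed
    thus "((\<lambda>t. (A t * B t) $$ (i, j)) has_real_derivative (DA * B 0 + A 0 * DB) $$ (i, j)) (at 0)"
      by (simp only: e1 e2)
  qed
qed

lemma mderiv_add:
  assumes A: "mat_has_derivative_at A DA 0" and B: "mat_has_derivative_at B DB 0"
    and "dim_row DA = dim_row DB" "dim_col DA = dim_col DB"
  shows "mat_has_derivative_at (\<lambda>t. A t + B t) (DA + DB) 0"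
  using assms unfolding mat_has_derivative_at_def by (auto intro!: DERIV_add)

lemma mderiv_const:
  "mat_has_derivative_at (\<lambda>t. C) (0\<^sub>m (dim_row C) (dim_col C)) 0"
  unfolding mat_has_derivative_at_def by auto

lemma mderiv_transpose:
  assumes A: "mat_has_derivative_at A DA 0"
  shows "mat_has_derivative_at (\<lambda>t. transpose_mat (A t)) (transpose_mat DA) 0"
  using assms unfolding mat_has_derivative_at_def by auto

lemma mderiv_kron_left:
  assumes A: "mat_has_derivative_at A DA 0"
  shows "mat_has_derivative_at (\<lambda>t. kron C (A t)) (kron C DA) 0"
proof -
  have dA: "\<And>t. dim_row (A t) = dim_row DA \<and> dim_col (A t) = dim_col DA"
    using A unfolding mat_has_derivative_at_def by auto
  show ?thesis unfolding mat_has_derivative_at_def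
  proof (intro conjI allI impI)
    fix t show "dim_row (kron C (A t)) = dim_row (kron C DA)" "dim_col (kron C (A t)) = dim_col (kron C DA)"
      using dA by (auto simp: kron_def)
  next
    fix i j assume i: "i < dim_row (kron C DA)" and j: "j < dim_col (kron C DA)"
    hence i': "i < dim_row C * dim_row DA" and j': "j < dim_col C * dim_col DA" by (auto simp: kron_def)
    hence p: "dim_row DA > 0" "dim_col DA > 0" by (auto intro: Nat.gr0I)
    have "((\<lambda>t. C $$ (i div dim_row DA, j div dim_col DA) * A t $$ (i mod dim_row DA, j mod dim_col DA))
       has_real_derivative C $$ (i div dim_row DA, j div dim_col DA) * DA $$ (i mod dim_row DA, j mod dim_col DA)) (at 0)"
      using A p unfolding mat_has_derivative_at_def by (auto intro!: DERIV_cmult)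
    thus "((\<lambda>t. kron C (A t) $$ (i, j)) has_real_derivative kron C DA $$ (i, j)) (at 0)"
      using i' j' dA by (simp add: kron_def)
  qed
qed

lemma mderiv_kron_right:
  assumes A: "mat_has_derivative_at A DA 0"
  shows "mat_has_derivative_at (\<lambda>t. kron (A t) C) (kron DA C) 0"
proof -
  have dA: "\<And>t. dim_row (A t) = dim_row DA \<and> dim_col (A t) = dim_col DA"
    using A unfolding mat_has_derivative_at_def by auto
  show ?thesis unfolding mat_has_derivative_at_def
  proof (intro conjI allI impI)
    fix t show "dim_row (kron (A t) C) = dim_row (kron DA C)" "dim_col (kron (A t) C) = dim_col (kron DA C)"
      using dA by (auto simp: kron_def)
  next
    fix i j assume i: "i < dim_row (kron DA C)" and j: "j < dim_col (kron DA C)"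
    hence i': "i < dim_row DA * dim_row C" and j': "j < dim_col DA * dim_col C" by (auto simp: kron_def)
    hence p: "i div dim_row C < dim_row DA" "j div dim_col C < dim_col DA"
      by (auto intro: less_mult_imp_div_less)
    have "((\<lambda>t. A t $$ (i div dim_row C, j div dim_col C) * C $$ (i mod dim_row C, j mod dim_col C))
       has_real_derivative DA $$ (i div dim_row C, j div dim_col C) * C $$ (i mod dim_row C, j mod dim_col C)) (at 0)"
      using A p unfolding mat_has_derivative_at_def by (auto intro!: DERIV_cmult_right)
    thus "((\<lambda>t. kron (A t) C $$ (i, j)) has_real_derivative kron DA C $$ (i, j)) (at 0)"
      using i' j' dA by (simp add: kron_def)
  qed
qed

lemma mderiv_mult2:
  assumes A: "mat_has_derivative_at A DA 0" and B: "mat_has_derivative_at B DB 0"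
    and dc: "dim_col DA = dim_row DB"
  shows "mat_has_derivative_at (\<lambda>t. A t * B t) (A 0 * DB + DA * B 0) 0"
proof -
  have dA: "\<And>t. dim_row (A t) = dim_row DA \<and> dim_col (A t) = dim_col DA"
    and dB: "\<And>t. dim_row (B t) = dim_row DB \<and> dim_col (B t) = dim_col DB"
    using A B unfolding mat_has_derivative_at_def by auto
  have "A 0 * DB + DA * B 0 = DA * B 0 + A 0 * DB"
    by (rule eq_matI) (use dA dB dc in auto)
  thus ?thesis using mderiv_mult[OF A B dc] by simp
qed

lemma coreL_deriv:
  assumes "\<forall>a<r (k-1). \<forall>i<n k. \<forall>b<r k. ((\<lambda>t. f t a i b) has_real_derivative g a i b) (at 0)"
  shows "mat_has_derivative_at (\<lambda>t. coreL r n k (f t)) (coreL r n k g) 0"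
  unfolding mat_has_derivative_at_def
proof (intro conjI allI impI)
  fix t show "dim_row (coreL r n k (f t)) = dim_row (coreL r n k g)"
    "dim_col (coreL r n k (f t)) = dim_col (coreL r n k g)" by (auto simp: coreL_def)
next
  fix i j assume i: "i < dim_row (coreL r n k g)" and j: "j < dim_col (coreL r n k g)"
  hence i': "i < r (k-1) * n k" and j': "j < r k" by (auto simp: coreL_def)
  hence p: "r (k-1) > 0" "i div r (k-1) < n k"
    by (auto intro: Nat.gr0I less_mult_imp_div_less simp: mult.commute)
  have "((\<lambda>t. f t (i mod r (k-1)) (i div r (k-1)) j) has_real_derivative g (i mod r (k-1)) (i div r (k-1)) j) (at 0)"
    using assms p j' by auto
  thus "((\<lambda>t. coreL r n k (f t) $$ (i, j)) has_real_derivative coreL r n k g $$ (i, j)) (at 0)"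
    using i' j' by (simp add: coreL_def)
qed

lemma coreR_deriv:
  assumes "\<forall>a<r (k-1). \<forall>i<n k. \<forall>b<r k. ((\<lambda>t. f t a i b) has_real_derivative g a i b) (at 0)"
  shows "mat_has_derivative_at (\<lambda>t. coreR r n k (f t)) (coreR r n k g) 0"
  unfolding mat_has_derivative_at_def
proof (intro conjI allI impI)
  fix t show "dim_row (coreR r n k (f t)) = dim_row (coreR r n k g)"
    "dim_col (coreR r n k (f t)) = dim_col (coreR r n k g)" by (auto simp: coreR_def)
next
  fix i j assume i: "i < dim_row (coreR r n k g)" and j: "j < dim_col (coreR r n k g)"
  hence i': "i < r (k-1)" and j': "j < n k * r k" by (auto simp: coreR_def)
  hence p: "n k > 0" "j div n k < r k"
    by (auto intro: Nat.gr0I less_mult_imp_div_less simp: mult.commute)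
  have "((\<lambda>t. f t i (j mod n k) (j div n k)) has_real_derivative g i (j mod n k) (j div n k)) (at 0)"
    using assms p i' by auto
  thus "((\<lambda>t. coreR r n k (f t) $$ (i, j)) has_real_derivative coreR r n k g $$ (i, j)) (at 0)"
    using i' j' by (simp add: coreR_def)
qed

lemma coreL_cong:
  assumes "\<forall>a<r (k-1). \<forall>i<n k. \<forall>b<r k. U a i b = U' a i b"
  shows "coreL r n k U = coreL r n k U'"
proof (rule eq_matI)
  fix i j assume i: "i < dim_row (coreL r n k U')" and j: "j < dim_col (coreL r n k U')"
  hence i': "i < r (k-1) * n k" and j': "j < r k" by (auto simp: coreL_def)
  hence p: "r (k-1) > 0" "i div r (k-1) < n k"
    by (auto intro: Nat.gr0I less_mult_imp_div_less simp: mult.commute)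
  show "coreL r n k U $$ (i, j) = coreL r n k U' $$ (i, j)" using assms i' j' p by (simp add: coreL_def)
qed (auto simp: coreL_def)

lemma coreR_cong:
  assumes "\<forall>a<r (k-1). \<forall>i<n k. \<forall>b<r k. U a i b = U' a i b"
  shows "coreR r n k U = coreR r n k U'"
proof (rule eq_matI)
  fix i j assume i: "i < dim_row (coreR r n k U')" and j: "j < dim_col (coreR r n k U')"
  hence i': "i < r (k-1)" and j': "j < n k * r k" by (auto simp: coreR_def)
  hence p: "n k > 0" "j div n k < r k"
    by (auto intro: Nat.gr0I less_mult_imp_div_less simp: mult.commute)
  show "coreR r n k U $$ (i, j) = coreR r n k U' $$ (i, j)" using assms i' j' p by (simp add: coreR_def)
qed (auto simp: coreR_def)

lemma Xle_cong:
  "(\<forall>j\<in>{1..k}. coreL r n j (U j) = coreL r n j (U' j)) \<Longrightarrow> Xle r n U k = Xle r n U' k"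
  by (induction k) auto

lemma XgeT_cong:
  "(\<forall>m'<m. coreR r n (d - m') (U (d - m')) = coreR r n (d - m') (U' (d - m'))) \<Longrightarrow>
   XgeT_aux d r n U m = XgeT_aux d r n U' m"
  by (induction m) auto

lemma dim_Vle: "dim_col (Vle r n U dV k) = (if k = 0 then 1 else r k)"
  by (cases k) (auto simp: coreL_def)

lemma dim_VgeT: "dim_row (VgeT_aux d r n U dV m) = (if m = 0 then 1 else r (d - m))"
  by (cases m) (auto simp: coreR_def)

lemma DXle_gen:
  assumes cL: "\<forall>j\<in>{1..d}. coreL r n j (C 0 j) = coreL r n j (U j)"
    and dL: "\<forall>j\<in>{1..d}. mat_has_derivative_at (\<lambda>t. coreL r n j (C t j)) (coreL r n j (dV j)) 0"
    and r0: "r 0 = 1"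
  shows "k \<le> d \<Longrightarrow> mat_has_derivative_at (\<lambda>t. Xle r n (C t) k) (Vle r n U dV k) 0"
proof (induction k)
  case 0
  show ?case using mderiv_const[of "1\<^sub>m 1"] by simp
next
  case (Suc k)
  have sk: "Suc k \<in> {1..d}" using Suc.prems by auto
  have X0: "Xle r n (C 0) k = Xle r n U k"
    by (rule Xle_cong) (use cL Suc.prems in auto)
  have IH: "mat_has_derivative_at (\<lambda>t. Xle r n (C t) k) (Vle r n U dV k) 0"
    using Suc.IH Suc.prems by simp
  have "mat_has_derivative_at (\<lambda>t. kron (1\<^sub>m (n (Suc k))) (Xle r n (C t) k) * coreL r n (Suc k) (C t (Suc k)))
      (kron (1\<^sub>m (n (Suc k))) (Vle r n U dV k) * coreL r n (Suc k) (C 0 (Suc k))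
       + kron (1\<^sub>m (n (Suc k))) (Xle r n (C 0) k) * coreL r n (Suc k) (dV (Suc k))) 0"
    by (rule mderiv_mult[OF mderiv_kron_left[OF IH] dL[rule_format, OF sk]])
       (use r0 in \<open>auto simp: kron_def coreL_def dim_Vle\<close>)
  thus ?case using cL sk X0 by simp
qed

lemma DXgeT_gen:
  assumes cR: "\<forall>j\<in>{1..d}. coreR r n j (C 0 j) = coreR r n j (U j)"
    and dR: "\<forall>j\<in>{1..d}. mat_has_derivative_at (\<lambda>t. coreR r n j (C t j)) (coreR r n j (dV j)) 0"
    and rd: "r d = 1"
  shows "m \<le> d \<Longrightarrow> mat_has_derivative_at (\<lambda>t. XgeT_aux d r n (C t) m) (VgeT_aux d r n U dV m) 0"
proof (induction m)
  case 0
  show ?case using mderiv_const[of "1\<^sub>m 1"] by simp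
next
  case (Suc m)
  have sk: "d - m \<in> {1..d}" using Suc.prems by auto
  have X0: "XgeT_aux d r n (C 0) m = XgeT_aux d r n U m"
    by (rule XgeT_cong) (use cR Suc.prems in auto)
  have IH: "mat_has_derivative_at (\<lambda>t. XgeT_aux d r n (C t) m) (VgeT_aux d r n U dV m) 0"
    using Suc.IH Suc.prems by simp
  have "mat_has_derivative_at (\<lambda>t. coreR r n (d - m) (C t (d - m)) * kron (XgeT_aux d r n (C t) m) (1\<^sub>m (n (d - m))))
      (coreR r n (d - m) (C 0 (d - m)) * kron (VgeT_aux d r n U dV m) (1\<^sub>m (n (d - m)))
       + coreR r n (d - m) (dV (d - m)) * kron (XgeT_aux d r n (C 0) m) (1\<^sub>m (n (d - m)))) 0"
    by (rule mderiv_mult2[OF dR[rule_format, OF sk] mderiv_kron_right[OF IH]])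
       (use rd Suc.prems in \<open>auto simp: kron_def coreR_def dim_VgeT\<close>)
  thus ?case using cR sk X0 by simp
qed

theorem lemma16:
  fixes d :: nat and n r :: "nat \<Rightarrow> nat"
    and X :: "nat list \<Rightarrow> real"
    and U dV :: "nat \<Rightarrow> core"
    and c :: "real \<Rightarrow> nat \<Rightarrow> core"
    and \<epsilon> :: real
  assumes d2: "d \<ge> 2"
    and npos: "\<forall>k\<in>{1..d}. n k > 0"
    and rpos: "\<forall>k\<in>{1..<d}. r k > 0"
    and r0: "r 0 = 1" and rd: "r d = 1"
    and XU: "min_lo_TT_decomp d n r U X"
    and gauge: "gauged d n r U dV"
    and eps: "\<epsilon> > 0"
    and smooth: "\<forall>k\<in>{1..d}. \<forall>a<r (k-1). \<forall>i<n k. \<forall>b<r k.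
                   smooth_real_on (\<lambda>t. c t k a i b) {-\<epsilon><..<\<epsilon>}"
    and expand: "\<forall>k\<in>{1..<d}. \<forall>a<r (k-1). \<forall>i<n k. \<forall>b<r k.
                   (\<lambda>t. c t k a i b - U k a i b - t * dV k a i b) \<in> O[at 0](\<lambda>t. t ^ 2)"
    and lastcore: "\<forall>t\<in>{-\<epsilon><..<\<epsilon>}. \<forall>a<r (d-1). \<forall>i<n d. \<forall>b<r d.
                   c t d a i b = U d a i b + t * dV d a i b"
    and curve_TT: "\<forall>t\<in>{-\<epsilon><..<\<epsilon>}. \<exists>Y. min_lo_TT_decomp d n r (c t) Y"
  shows "\<forall>k\<in>{1..d}.
           mat_has_derivative_at (\<lambda>t. Xle r n (c t) k) (Vle r n U dV k) 0
         \<and> mat_has_derivative_at (\<lambda>t. Xge d r n (c t) k) (Vge d r n U dV k) 0"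
proof -
  have core: "c 0 k a i b = U k a i b \<and> ((\<lambda>t. c t k a i b) has_real_derivative dV k a i b) (at 0)"
    if k: "k \<in> {1..d}" and a: "a < r (k-1)" and i: "i < n k" and b: "b < r k" for k a i b
  proof (cases "k = d")
    case True
    have z: "(0::real) \<in> {-\<epsilon><..<\<epsilon>}" using eps by auto
    have "((\<lambda>t. U k a i b + t * dV k a i b) has_real_derivative dV k a i b) (at 0)"
      by (auto intro!: derivative_eq_intros)
    hence "((\<lambda>t. c t k a i b) has_real_derivative dV k a i b) (at 0)"
      by (rule has_field_derivative_transform_within_open[where S="{-\<epsilon><..<\<epsilon>}"])
         (use z lastcore True a i b in auto)
    moreover have "c 0 k a i b = U k a i b" using lastcore z True a i b by auto
    ultimately show ?thesis by simp
  next
    case False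
    hence "k \<in> {1..<d}" using k by auto
    thus ?thesis using scalar_core[OF eps] smooth expand k a i b by blast
  qed
  have cL: "coreL r n k (c 0 k) = coreL r n k (U k)" if "k \<in> {1..d}" for k
    by (rule coreL_cong, intro allI impI) (rule conjunct1[OF core[OF that]]; assumption)
  have cR: "coreR r n k (c 0 k) = coreR r n k (U k)" if "k \<in> {1..d}" for k
    by (rule coreR_cong, intro allI impI) (rule conjunct1[OF core[OF that]]; assumption)
  have dL: "mat_has_derivative_at (\<lambda>t. coreL r n k (c t k)) (coreL r n k (dV k)) 0" if "k \<in> {1..d}" for k
    by (rule coreL_deriv, intro allI impI) (rule conjunct2[OF core[OF that]]; assumption)
  have dR: "mat_has_derivative_at (\<lambda>t. coreR r n k (c t k)) (coreR r n k (dV k)) 0" if "k \<in> {1..d}" for k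
    by (rule coreR_deriv, intro allI impI) (rule conjunct2[OF core[OF that]]; assumption)
  show ?thesis
  proof
    fix k assume k: "k \<in> {1..d}"
    have A: "mat_has_derivative_at (\<lambda>t. Xle r n (c t) k) (Vle r n U dV k) 0"
      by (rule DXle_gen[of d r n c U dV k]) (use cL dL r0 k in auto)
    have B: "mat_has_derivative_at (\<lambda>t. XgeT_aux d r n (c t) (d + 1 - k)) (VgeT_aux d r n U dV (d + 1 - k)) 0"
      by (rule DXgeT_gen[of d r n c U dV "d + 1 - k"]) (use cR dR rd k in auto)
    show "mat_has_derivative_at (\<lambda>t. Xle r n (c t) k) (Vle r n U dV k) 0
         \<and> mat_has_derivative_at (\<lambda>t. Xge d r n (c t) k) (Vge d r n U dV k) 0"
      using A mderiv_transpose[OF B] unfolding Xge_def Vge_def by auto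
  qed
qed

end
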